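(* Let $A$ be a Banach algebra and $n\ge 2$ such that $Mul_{n,l}(A,A^{*})$ is algebraically reflexive, and let $X$ be a right Banach $A$-module with $\{x\in X: x^{\perp}=A\}=\{0\}$. Then every approximately local left $n$-multiplier from $A$ into $X$ is a left $n$-multiplier.
   Context: $A^*$ is the dual of $A$, a right Banach $A$-module via $(f\cdot a)(b)=f(ab)$. A bounded linear map $T:A\to X$ is a left $n$-multiplier if $T(a_1\cdots a_n)=T(a_1\cdots a_{n-1})\cdot a_n$ for all $a_i\in A$; $Mul_{n,l}(A,X)$ is the set of these. $T$ is an approximately local left $n$-multiplier if for every $a\in A$ there is a sequence $(T_{a,m})_m$ in $Mul_{n,l}(A,X)$ with $T(a)=\lim_m T_{a,m}(a)$. For $S\subseteq B(A,Y)$, $\mathrm{ref}(S)=\{T\in B(A,Y): T(x)\in\overline{\{s(x):s\in S\}}\ \forall x\in A\}$; $S$ is algebraically reflexive if $\mathrm{ref}(S)\subseteq S$. For $x\in X$, $x^\perp=\{a\in A: x\cdot a=0\}$. *)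

theory Defs
  imports "HOL-Analysis.Analysis"
begin

(* Product a_1 * ... * a_k of a nonempty list (multiplication is associative,
   not necessarily commutative, no unit required). *)
definition lprod :: "'a::real_normed_algebra list \<Rightarrow> 'a" where
  "lprod xs = foldl (*) (hd xs) (tl xs)"

definition right_banach_module :: "('x::banach \<Rightarrow> 'a::{real_normed_algebra,banach} \<Rightarrow> 'x) \<Rightarrow> bool" where
  "right_banach_module act \<longleftrightarrow> bounded_bilinear act \<and>
     (\<forall>x a b. act (act x a) b = act x (a * b))"

(* dual module A^* with (f \<cdot> a)(b) = f(a b) *)
definition dual_act :: "('a::real_normed_algebra \<Rightarrow>\<^sub>L real) \<Rightarrow> 'a \<Rightarrow> ('a \<Rightarrow>\<^sub>L real)" where
  "dual_act f a = f o\<^sub>L blinfun_mult_right a"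

definition left_n_multipliers :: "nat \<Rightarrow> ('x::real_normed_vector \<Rightarrow> 'a::real_normed_algebra \<Rightarrow> 'x) \<Rightarrow> ('a \<Rightarrow> 'x) set" where
  "left_n_multipliers n act = {T. bounded_linear T \<and>
     (\<forall>as. length as = n \<longrightarrow> T (lprod as) = act (T (lprod (butlast as))) (last as))}"

definition approx_local_left_n_multiplier ::
  "nat \<Rightarrow> ('x::real_normed_vector \<Rightarrow> 'a::real_normed_algebra \<Rightarrow> 'x) \<Rightarrow> ('a \<Rightarrow> 'x) \<Rightarrow> bool" where
  "approx_local_left_n_multiplier n act T \<longleftrightarrow> bounded_linear T \<and>
     (\<forall>a. \<exists>S::nat \<Rightarrow> ('a \<Rightarrow> 'x). (\<forall>m. S m \<in> left_n_multipliers n act) \<and>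
        (\<lambda>m. S m a) \<longlonglongrightarrow> T a)"

definition reflexive_closure :: "('a::real_normed_vector \<Rightarrow> 'y::real_normed_vector) set \<Rightarrow> ('a \<Rightarrow> 'y) set" where
  "reflexive_closure S = {T. bounded_linear T \<and> (\<forall>x. T x \<in> closure {s x | s. s \<in> S})}"

definition algebraically_reflexive :: "('a::real_normed_vector \<Rightarrow> 'y::real_normed_vector) set \<Rightarrow> bool" where
  "algebraically_reflexive S \<longleftrightarrow> reflexive_closure S \<subseteq> S"

definition annihilator :: "('x::zero \<Rightarrow> 'a \<Rightarrow> 'x) \<Rightarrow> 'x \<Rightarrow> 'a set" where
  "annihilator act x = {a. act x a = 0}"

end

theory Submission
  imports Defs
begin

definition good :: "'x::real_normed_vector \<Rightarrow> ('x \<times> real) set \<Rightarrow> bool" where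
  "good d G \<longleftrightarrow> (\<forall>x a y b. (x,a)\<in>G \<longrightarrow> (y,b)\<in>G \<longrightarrow> (x+y,a+b)\<in>G) \<and>
     (\<forall>x a r. (x,a)\<in>G \<longrightarrow> (r *\<^sub>R x, r*a)\<in>G) \<and>
     (\<forall>x a. (x,a)\<in>G \<longrightarrow> a \<le> norm x) \<and> (d, norm d) \<in> G"

lemma good_sv:
  assumes "good d G" "(x,a)\<in>G" "(x,b)\<in>G" shows "a = b"
proof -
  from assms have "(x + (-1) *\<^sub>R x, a + (-1)*b) \<in> G" unfolding good_def by blast
  hence h1: "a - b \<le> 0" using assms(1) unfolding good_def by fastforce
  from assms have "(x + (-1) *\<^sub>R x, b + (-1)*a) \<in> G" unfolding good_def by blast
  hence "b - a \<le> 0" using assms(1) unfolding good_def by fastforce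
  with h1 show ?thesis by simp
qed

lemma good_ext:
  assumes g: "good d M" and nx: "\<forall>a. (x0,a) \<notin> M"
  shows "\<exists>M'. good d M' \<and> M \<subseteq> M' \<and> M' \<noteq> M"
proof -
  have add: "\<And>x a y b. (x,a)\<in>M \<Longrightarrow> (y,b)\<in>M \<Longrightarrow> (x+y,a+b)\<in>M"
    and sc: "\<And>x a r. (x,a)\<in>M \<Longrightarrow> (r *\<^sub>R x, r*a)\<in>M"
    and dom: "\<And>x a. (x,a)\<in>M \<Longrightarrow> a \<le> norm x" and dM: "(d, norm d) \<in> M"
    using g unfolding good_def by blast+
  define L where "L = {a - norm (h - x0) | h a. (h,a) \<in> M}"
  have "(0,0) \<in> M" using sc[OF dM, of 0] by simp
  hence Lne: "L \<noteq> {}" unfolding L_def by blast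
  have Lub: "l \<le> norm (h2 + x0) - b" if "l \<in> L" "(h2,b) \<in> M" for l h2 b
  proof -
    obtain h a where l: "l = a - norm (h - x0)" "(h,a)\<in>M" using \<open>l\<in>L\<close> unfolding L_def by blast
    have "a + b \<le> norm (h + h2)" using dom[OF add[OF l(2) that(2)]] .
    also have "h + h2 = (h - x0) + (h2 + x0)" by simp
    also have "norm \<dots> \<le> norm (h - x0) + norm (h2 + x0)" by (rule norm_triangle_ineq)
    finally show ?thesis using l by simp
  qed
  define c where "c = Sup L"
  have bdd: "bdd_above L" using Lub[OF _ \<open>(0,0)\<in>M\<close>] unfolding bdd_above_def by blast
  have c_up: "a - norm (h - x0) \<le> c" if "(h,a)\<in>M" for h a
    unfolding c_def by (rule cSup_upper[OF _ bdd]) (use that L_def in blast)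
  have c_lo: "c \<le> norm (h2 + x0) - b" if "(h2,b)\<in>M" for h2 b
    unfolding c_def by (rule cSup_least[OF Lne]) (use Lub that in blast)
  define M' where "M' = {(h + t *\<^sub>R x0, a + t * c) | h a t. (h,a) \<in> M}"
  have key: "a + t * c \<le> norm (h + t *\<^sub>R x0)" if "(h,a) \<in> M" for h a t
  proof (cases "t = 0")
    case True then show ?thesis using dom[OF that] by simp
  next
    case False
    show ?thesis
    proof (cases "t > 0")
      case True
      have "(inverse t *\<^sub>R h, inverse t * a) \<in> M" by (rule sc[OF that])
      from c_lo[OF this] have "inverse t * a + c \<le> norm (inverse t *\<^sub>R h + x0)" by simp
      hence "t * (inverse t * a + c) \<le> t * norm (inverse t *\<^sub>R h + x0)"
        using True by (simp add: mult_left_mono)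
      also have "t * norm (inverse t *\<^sub>R h + x0) = norm (t *\<^sub>R (inverse t *\<^sub>R h + x0))"
        using True by simp
      also have "t *\<^sub>R (inverse t *\<^sub>R h + x0) = h + t *\<^sub>R x0"
        using True by (simp add: scaleR_add_right)
      finally show ?thesis using True by (simp add: algebra_simps)
    next
      case False2: False
      define s where "s = - t"
      have s: "s > 0" using False False2 s_def by simp
      have "(inverse s *\<^sub>R h, inverse s * a) \<in> M" by (rule sc[OF that])
      from c_up[OF this] have "inverse s * a - c \<le> norm (inverse s *\<^sub>R h - x0)" by simp
      hence "s * (inverse s * a - c) \<le> s * norm (inverse s *\<^sub>R h - x0)"
        using s by (simp add: mult_left_mono)
      also have "s * norm (inverse s *\<^sub>R h - x0) = norm (s *\<^sub>R (inverse s *\<^sub>R h - x0))"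
        using s by simp
      also have "s *\<^sub>R (inverse s *\<^sub>R h - x0) = h + t *\<^sub>R x0"
        using s by (simp add: scaleR_diff_right s_def)
      finally show ?thesis using s by (simp add: algebra_simps s_def)
    qed
  qed
  have "good d M'"
    unfolding good_def
  proof (intro conjI allI impI)
    fix x a y b assume "(x,a)\<in>M'" "(y,b)\<in>M'"
    then obtain h1 a1 t1 h2 a2 t2 where "x = h1 + t1 *\<^sub>R x0" "a = a1 + t1*c" "(h1,a1)\<in>M"
      "y = h2 + t2 *\<^sub>R x0" "b = a2 + t2*c" "(h2,a2)\<in>M" unfolding M'_def by blast
    then show "(x+y,a+b)\<in>M'" unfolding M'_def
      by (intro CollectI exI[of _ "h1+h2"] exI[of _ "a1+a2"] exI[of _ "t1+t2"])
         (auto simp: add algebra_simps)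
  next
    fix x a r assume "(x,a)\<in>M'"
    then obtain h1 a1 t1 where "x = h1 + t1 *\<^sub>R x0" "a = a1 + t1*c" "(h1,a1)\<in>M"
      unfolding M'_def by blast
    then have "(r *\<^sub>R x, r*a) = (r *\<^sub>R h1 + (r*t1) *\<^sub>R x0, r*a1 + (r*t1)*c)"
      by (simp add: algebra_simps)
    moreover have "(r *\<^sub>R h1, r*a1) \<in> M" using sc \<open>(h1,a1)\<in>M\<close> by blast
    ultimately show "(r *\<^sub>R x, r*a)\<in>M'" unfolding M'_def by blast
  next
    fix x a assume "(x,a)\<in>M'"
    then show "a \<le> norm x" unfolding M'_def using key by blast
  next
    show "(d, norm d) \<in> M'" unfolding M'_def
      by (intro CollectI exI[of _ d] exI[of _ "norm d"] exI[of _ 0]) (simp add: dM)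
  qed
  moreover have "M \<subseteq> M'"
  proof
    fix p assume "p \<in> M"
    then obtain h a where "p = (h,a)" "(h,a)\<in>M" by (cases p) auto
    then show "p \<in> M'" unfolding M'_def
      by (intro CollectI exI[of _ h] exI[of _ a] exI[of _ 0]) simp
  qed
  moreover have "(x0, c) \<in> M'" unfolding M'_def
    by (intro CollectI exI[of _ 0] exI[of _ 0] exI[of _ 1]) (simp add: \<open>(0,0)\<in>M\<close>)
  hence "M' \<noteq> M" using nx by blast
  ultimately show ?thesis by blast
qed

lemma hahn_banach_sep:
  fixes d :: "'x::real_normed_vector"
  assumes "d \<noteq> 0"
  shows "\<exists>f::'x\<Rightarrow>real. bounded_linear f \<and> f d \<noteq> 0"
proof -
  let ?A = "{G. good d G}"
  have "\<forall>C\<in>chains ?A. \<exists>U\<in>?A. \<forall>X\<in>C. X \<subseteq> U"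
  proof
    fix C assume C: "C \<in> chains ?A"
    show "\<exists>U\<in>?A. \<forall>X\<in>C. X \<subseteq> U"
    proof (cases "C = {}")
      case True
      let ?G = "{(t *\<^sub>R d, t * norm d) | t. True}"
      have "good d ?G"
        unfolding good_def
      proof (intro conjI allI impI)
        fix x a y b assume "(x,a)\<in>?G" "(y,b)\<in>?G"
        then obtain t s where "x = t *\<^sub>R d" "a = t * norm d" "y = s *\<^sub>R d" "b = s * norm d" by blast
        then have "(x+y,a+b) = ((t+s) *\<^sub>R d, (t+s) * norm d)" by (simp add: algebra_simps)
        then show "(x+y,a+b)\<in>?G" by blast
      next
        fix x a r assume "(x,a)\<in>?G"
        then obtain t where "x = t *\<^sub>R d" "a = t * norm d" by blast
        then have "(r *\<^sub>R x, r*a) = ((r*t) *\<^sub>R d, (r*t) * norm d)" by simp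
        then show "(r *\<^sub>R x, r*a)\<in>?G" by blast
      next
        fix x a assume "(x,a)\<in>?G"
        then obtain t where "x = t *\<^sub>R d" "a = t * norm d" by blast
        moreover have "t * norm d \<le> \<bar>t\<bar> * norm d" by (simp add: mult_right_mono)
        ultimately show "a \<le> norm x" by simp
      next
        have "(d, norm d) = (1 *\<^sub>R d, 1 * norm d)" by simp
        then show "(d, norm d) \<in> ?G" by blast
      qed
      then show ?thesis using True by blast
    next
      case False
      have sub: "C \<subseteq> ?A" and ch: "\<And>X Y. X\<in>C \<Longrightarrow> Y\<in>C \<Longrightarrow> X \<subseteq> Y \<or> Y \<subseteq> X"
        using C unfolding chains_def chain_subset_def by blast+
      have "good d (\<Union>C)"
        unfolding good_def
      proof (intro conjI allI impI)
        fix x a y b assume "(x,a)\<in>\<Union>C" "(y,b)\<in>\<Union>C"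
        then obtain X Y where "X\<in>C" "Y\<in>C" "(x,a)\<in>X" "(y,b)\<in>Y" by blast
        then obtain Z where "Z\<in>C" "(x,a)\<in>Z" "(y,b)\<in>Z" using ch by blast
        then show "(x+y,a+b)\<in>\<Union>C" using sub unfolding good_def by blast
      next
        fix x a r assume "(x,a)\<in>\<Union>C"
        then show "(r *\<^sub>R x, r*a)\<in>\<Union>C" using sub unfolding good_def by blast
      next
        fix x a assume "(x,a)\<in>\<Union>C"
        then show "a \<le> norm x" using sub unfolding good_def by blast
      next
        show "(d, norm d) \<in> \<Union>C" using sub False unfolding good_def by blast
      qed
      then show ?thesis by blast
    qed
  qed
  from Zorn_Lemma2[OF this] obtain M where gM: "good d M"
    and mx: "\<And>X. good d X \<Longrightarrow> M \<subseteq> X \<Longrightarrow> X = M" by blast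
  have tot: "\<exists>a. (x,a) \<in> M" for x
    using good_ext[OF gM, of x] mx by blast
  define f where "f x = (THE a. (x,a) \<in> M)" for x
  have fM: "(x, f x) \<in> M" for x
    unfolding f_def by (rule theI') (use tot good_sv[OF gM] in blast)
  have fv: "(x,a) \<in> M \<Longrightarrow> f x = a" for x a using good_sv[OF gM fM] by blast
  have add: "f (x+y) = f x + f y" for x y
    using gM fM fv unfolding good_def by blast
  have sc: "f (r *\<^sub>R x) = r * f x" for r x
    using gM fM fv unfolding good_def by blast
  have le: "f x \<le> norm x" for x using gM fM unfolding good_def by blast
  have "\<bar>f x\<bar> \<le> norm x" for x
    using le[of x] le[of "-x"] sc[of "-1" x] by simp
  hence "bounded_linear f"
    by (intro bounded_linear_intro[where K=1]) (auto simp: add sc)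
  moreover have "f d = norm d" using fv gM unfolding good_def by blast
  ultimately show ?thesis using assms by (intro exI[of _ f]) simp
qed


lemma bb_comp:
  fixes act :: "'x::real_normed_vector \<Rightarrow> 'a::real_normed_vector \<Rightarrow> 'y::real_normed_vector"
    and f :: "'y \<Rightarrow> real"
  assumes "bounded_bilinear act" "bounded_linear f"
  shows "bounded_bilinear (\<lambda>x b. f (act x b))"
proof -
  interpret A: bounded_bilinear act by fact
  interpret F: bounded_linear f by fact
  obtain K where K: "\<And>a b. norm (act a b) \<le> norm a * norm b * K" using A.bounded by blast
  obtain L where L: "\<And>x. norm (f x) \<le> norm x * L" "L \<ge> 0" using F.nonneg_bounded by blast
  show ?thesis
  proof unfold_locales
    fix a a' b b' :: _ and r :: real
    show "f (act (a + a') b) = f (act a b) + f (act a' b)" by (simp add: A.add_left F.add)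
    show "f (act a (b + b')) = f (act a b) + f (act a b')" by (simp add: A.add_right F.add)
    show "f (act (r *\<^sub>R a) b) = r *\<^sub>R f (act a b)" by (simp add: A.scaleR_left F.scale)
    show "f (act a (r *\<^sub>R b)) = r *\<^sub>R f (act a b)" by (simp add: A.scaleR_right F.scale)
  next
    have "norm (f (act a b)) \<le> norm a * norm b * (K * L)" for a b
    proof -
      have "norm (f (act a b)) \<le> norm (act a b) * L" by (rule L)
      also have "\<dots> \<le> (norm a * norm b * K) * L" by (rule mult_right_mono[OF K L(2)])
      finally show ?thesis by (simp add: ac_simps)
    qed
    then show "\<exists>K. \<forall>a b. norm (f (act a b)) \<le> norm a * norm b * K" by blast
  qed
qed

lemma key:
  fixes act :: "'x::banach \<Rightarrow> 'a::{real_normed_algebra,banach} \<Rightarrow> 'x"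
    and n :: nat and T :: "'a \<Rightarrow> 'x" and f :: "'x \<Rightarrow> real"
  assumes refl: "algebraically_reflexive (left_n_multipliers n (dual_act :: ('a \<Rightarrow>\<^sub>L real) \<Rightarrow> 'a \<Rightarrow> _))"
    and md: "right_banach_module act"
    and ap: "approx_local_left_n_multiplier n act T"
    and fl: "bounded_linear f"
    and len: "length as = n"
  shows "f (act (T (lprod as)) b) = f (act (act (T (lprod (butlast as))) (last as)) b)"
proof -
  have bba: "bounded_bilinear act" and asc: "\<And>x a b. act (act x a) b = act x (a * b)"
    using md unfolding right_banach_module_def by auto
  have bb: "bounded_bilinear (\<lambda>x b. f (act x b))" by (rule bb_comp[OF bba fl])
  define Lf where "Lf = bounded_bilinear.prod_right (\<lambda>x b. f (act x b))"
  have Lfbl: "bounded_linear Lf" unfolding Lf_def by (rule bounded_bilinear.bounded_linear_prod_right[OF bb])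
  have Lfa: "blinfun_apply (Lf x) b = f (act x b)" for x b
    unfolding Lf_def using bounded_bilinear.prod_right.rep_eq[OF bb] by simp
  have Tbl: "bounded_linear T" using ap unfolding approx_local_left_n_multiplier_def by blast
  have mul: "Lf \<circ> U \<in> left_n_multipliers n dual_act" if U: "U \<in> left_n_multipliers n act" for U
  proof -
    have Ubl: "bounded_linear U" and Ueq: "\<And>as. length as = n \<Longrightarrow> U (lprod as) = act (U (lprod (butlast as))) (last as)"
      using U unfolding left_n_multipliers_def by auto
    show ?thesis unfolding left_n_multipliers_def
    proof (intro CollectI conjI allI impI)
      show "bounded_linear (Lf \<circ> U)" using bounded_linear_compose[OF Lfbl Ubl] by (simp add: comp_def)
      fix as :: "'a list" assume "length as = n"
      show "(Lf \<circ> U) (lprod as) = dual_act ((Lf \<circ> U) (lprod (butlast as))) (last as)"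
        by (rule blinfun_eqI) (simp add: Lfa dual_act_def Ueq[OF \<open>length as = n\<close>] asc)
    qed
  qed
  have "Lf \<circ> T \<in> reflexive_closure (left_n_multipliers n dual_act)"
    unfolding reflexive_closure_def
  proof (intro CollectI conjI allI)
    show "bounded_linear (Lf \<circ> T)" using bounded_linear_compose[OF Lfbl Tbl] by (simp add: comp_def)
    fix a
    obtain S where S: "\<And>m. S m \<in> left_n_multipliers n act" and conv: "(\<lambda>m. S m a) \<longlonglongrightarrow> T a"
      using ap unfolding approx_local_left_n_multiplier_def by blast
    have "(\<lambda>m. Lf (S m a)) \<longlonglongrightarrow> Lf (T a)" by (rule bounded_linear.tendsto[OF Lfbl conv])
    moreover have "\<forall>m. Lf (S m a) \<in> {s a | s. s \<in> left_n_multipliers n dual_act}"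
      using mul[OF S] by (auto intro!: exI[of _ "Lf \<circ> S m" for m])
    ultimately show "(Lf \<circ> T) a \<in> closure {s a | s. s \<in> left_n_multipliers n dual_act}"
      unfolding closure_sequential comp_def by (intro exI[of _ "\<lambda>m. Lf (S m a)"]) simp
  qed
  with refl have "Lf \<circ> T \<in> left_n_multipliers n dual_act" unfolding algebraically_reflexive_def by blast
  then have "(Lf \<circ> T) (lprod as) = dual_act ((Lf \<circ> T) (lprod (butlast as))) (last as)"
    using len unfolding left_n_multipliers_def by blast
  then have "blinfun_apply ((Lf \<circ> T) (lprod as)) b = blinfun_apply (dual_act ((Lf \<circ> T) (lprod (butlast as))) (last as)) b"
    by simp
  then show ?thesis by (simp add: Lfa dual_act_def asc)
qed

theorem theorem3p3:
  fixes act :: "'x::banach \<Rightarrow> 'a::{real_normed_algebra,banach} \<Rightarrow> 'x"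
    and n :: nat and T :: "'a \<Rightarrow> 'x"
  assumes "n \<ge> 2"
    and "algebraically_reflexive (left_n_multipliers n (dual_act :: ('a \<Rightarrow>\<^sub>L real) \<Rightarrow> 'a \<Rightarrow> _))"
    and "right_banach_module act"
    and "{x. annihilator act x = UNIV} = {0}"
    and "approx_local_left_n_multiplier n act T"
  shows "T \<in> left_n_multipliers n act"
proof -
  have bba: "bounded_bilinear act" using assms(3) unfolding right_banach_module_def by auto
  interpret A: bounded_bilinear act by (rule bba)
  have Tbl: "bounded_linear T" using assms(5) unfolding approx_local_left_n_multiplier_def by blast
  show ?thesis unfolding left_n_multipliers_def
  proof (intro CollectI conjI allI impI)
    show "bounded_linear T" by (rule Tbl)
    fix as :: "'a list" assume len: "length as = n"
    define D where "D = T (lprod as) - act (T (lprod (butlast as))) (last as)"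
    have "act D b = 0" for b
    proof (rule ccontr)
      assume nz: "act D b \<noteq> 0"
      obtain f :: "'x \<Rightarrow> real" where fl: "bounded_linear f" and fne: "f (act D b) \<noteq> 0"
        using hahn_banach_sep[OF nz] by blast
      interpret F: bounded_linear f by (rule fl)
      have "f (act D b) = f (act (T (lprod as)) b) - f (act (act (T (lprod (butlast as))) (last as)) b)"
        unfolding D_def by (simp add: A.diff_left F.diff)
      also have "\<dots> = 0" using key[OF assms(2) assms(3) assms(5) fl len] by simp
      finally show False using fne by simp
    qed
    then have "D \<in> {x. annihilator act x = UNIV}" unfolding annihilator_def by auto
    then have "D = 0" using assms(4) by blast
    then show "T (lprod as) = act (T (lprod (butlast as))) (last as)" unfolding D_def by simp
  qed
qed

end
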